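(* Let $t\ge0$, $R>1$, and let $h$ be a minimizer of $E$ over $\mathcal A_h$ satisfying $h(r)\ge\frac23$ for all $r\in[1,R]$. Then for every $x$ with $1\le|x|\le R$ (where the frame $(\mathbf n,\mathbf m,\mathbf p)$ is defined) and every $\mathbf W\in S_0$, \[ \psi(\mathbf W)+\frac{3h(|x|)}{8}\left(2\,\mathbf E_0\cdot\mathbf W+|\mathbf W|^2\right)^2\ge0, \] where $\mathbf E_0=\sqrt{3/2}\,(\hat x\otimes\hat x-\mathbf I/3)$.
   Context: $S_0$: real symmetric traceless $3\times3$ matrices; $\mathbf A\cdot\mathbf B=A_{ij}B_{ij}$, $|\mathbf W|^2=\mathbf W\cdot\mathbf W$. $h_+=\frac{3+\sqrt{9+8t}}{4}$; $E[h]=\int_1^R\frac{r^2}{2}(h')^2+3h^2+r^2[\frac t8(1-h^2)^2+\frac{h_+}{8}(1+3h^4-4h^3)]dr$ on $\mathcal A_h=\{h\in L^2(1,R): h'\in L^2((1,R);r^2dr),\ h(1)=h(R)=1\}$. For $x$ with spherical coordinates $(r,\theta,\phi)$: $\mathbf n=\hat x=(\sin\theta\cos\phi,\sin\theta\sin\phi,\cos\theta)$, $\mathbf m=(\cos\theta\cos\phi,\cos\theta\sin\phi,-\sin\theta)$, $\mathbf p=(-\sin\phi,\cos\phi,0)$. Put $\mathbf E=\mathbf n\otimes\mathbf n-\mathbf I/3$, $\mathbf F=\mathbf n\otimes\mathbf m+\mathbf m\otimes\mathbf n$, $\mathbf G=\mathbf n\otimes\mathbf p+\mathbf p\otimes\mathbf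 n$, $\mathbf X=\mathbf m\otimes\mathbf p+\mathbf p\otimes\mathbf m$, $\mathbf Y=\mathbf m\otimes\mathbf m-\mathbf p\otimes\mathbf p$, and write $\mathbf W=w_0\mathbf E+w_1\mathbf F+w_2\mathbf G+w_3\mathbf X+w_4\mathbf Y$. Define $\psi(\mathbf W)=-\frac{\sqrt6}{2}\mathrm{tr}\,\mathbf W^3-\frac12w_0^2+\frac92w_3^2+\frac92w_4^2$. *)

theory Defs
  imports "HOL-Analysis.Analysis"
begin

type_synonym mat3 = "real^3^3"

definition hplus :: "real \<Rightarrow> real" where
  "hplus t = (3 + sqrt (9 + 8 * t)) / 4"

text \<open>Integrand of the reduced energy; g plays the role of h'.\<close>
definition energy_density :: "real \<Rightarrow> real \<Rightarrow> real \<Rightarrow> real \<Rightarrow> real" where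
  "energy_density t r hv gv =
     r^2 / 2 * gv^2 + 3 * hv^2
     + r^2 * (t / 8 * (1 - hv^2)^2 + hplus t / 8 * (1 + 3 * hv^4 - 4 * hv^3))"

definition energy :: "real \<Rightarrow> real \<Rightarrow> (real \<Rightarrow> real) \<Rightarrow> (real \<Rightarrow> real) \<Rightarrow> real" where
  "energy t R h g = (LINT r:{1..R}|lborel. energy_density t r (h r) (g r))"

text \<open>Admissible class A_h: h (continuous representative on [1,R]) has weak derivative g
  with g in L^2((1,R); r^2 dr); boundary values h(1) = h(R) = 1.  Since R is finite,
  g is then integrable on [1,R], h is absolutely continuous and in L^2(1,R).\<close>
definition admissible :: "real \<Rightarrow> (real \<Rightarrow> real) \<Rightarrow> (real \<Rightarrow> real) \<Rightarrow> bool" where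
  "admissible R h g \<longleftrightarrow>
     g \<in> borel_measurable lborel \<and>
     set_integrable lborel {1..R} g \<and>
     set_integrable lborel {1..R} (\<lambda>r. r^2 * (g r)^2) \<and>
     (\<forall>r\<in>{1..R}. h r = 1 + (LINT s:{1..r}|lborel. g s)) \<and>
     h R = 1"

definition is_minimizer :: "real \<Rightarrow> real \<Rightarrow> (real \<Rightarrow> real) \<Rightarrow> bool" where
  "is_minimizer t R h \<longleftrightarrow>
     (\<exists>g. admissible R h g \<and>
        (\<forall>k gk. admissible R k gk \<longrightarrow> energy t R h g \<le> energy t R k gk))"

definition outer :: "real^3 \<Rightarrow> real^3 \<Rightarrow> mat3" where
  "outer u v = (\<chi> i j. u$i * v$j)"

definition mdot :: "mat3 \<Rightarrow> mat3 \<Rightarrow> real" where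
  "mdot A B = (\<Sum>i\<in>UNIV. \<Sum>j\<in>UNIV. A$i$j * B$i$j)"

definition mtrace :: "mat3 \<Rightarrow> real" where
  "mtrace A = (\<Sum>i\<in>UNIV. A$i$i)"

definition S0 :: "mat3 set" where
  "S0 = {A. transpose A = A \<and> mtrace A = 0}"

definition nvec :: "real \<Rightarrow> real \<Rightarrow> real^3" where
  "nvec \<theta> \<phi> = vector [sin \<theta> * cos \<phi>, sin \<theta> * sin \<phi>, cos \<theta>]"
definition mvec :: "real \<Rightarrow> real \<Rightarrow> real^3" where
  "mvec \<theta> \<phi> = vector [cos \<theta> * cos \<phi>, cos \<theta> * sin \<phi>, - sin \<theta>]"
definition pvec :: "real \<Rightarrow> real^3" where
  "pvec \<phi> = vector [- sin \<phi>, cos \<phi>, 0]"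

definition Emat :: "real \<Rightarrow> real \<Rightarrow> mat3" where
  "Emat \<theta> \<phi> = outer (nvec \<theta> \<phi>) (nvec \<theta> \<phi>) - (1/3) *\<^sub>R mat 1"
definition Fmat :: "real \<Rightarrow> real \<Rightarrow> mat3" where
  "Fmat \<theta> \<phi> = outer (nvec \<theta> \<phi>) (mvec \<theta> \<phi>) + outer (mvec \<theta> \<phi>) (nvec \<theta> \<phi>)"
definition Gmat :: "real \<Rightarrow> real \<Rightarrow> mat3" where
  "Gmat \<theta> \<phi> = outer (nvec \<theta> \<phi>) (pvec \<phi>) + outer (pvec \<phi>) (nvec \<theta> \<phi>)"
definition Xmat :: "real \<Rightarrow> real \<Rightarrow> mat3" where
  "Xmat \<theta> \<phi> = outer (mvec \<theta> \<phi>) (pvec \<phi>) + outer (pvec \<phi>) (mvec \<theta> \<phi>)"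
definition Ymat :: "real \<Rightarrow> real \<Rightarrow> mat3" where
  "Ymat \<theta> \<phi> = outer (mvec \<theta> \<phi>) (mvec \<theta> \<phi>) - outer (pvec \<phi>) (pvec \<phi>)"

text \<open>psi, given the frame coefficients w0,...,w4 of W.\<close>
definition psi :: "mat3 \<Rightarrow> real \<Rightarrow> real \<Rightarrow> real \<Rightarrow> real" where
  "psi W w0 w3 w4 = - sqrt 6 / 2 * mtrace (W ** W ** W) - 1/2 * w0^2 + 9/2 * w3^2 + 9/2 * w4^2"

end

theory Submission
  imports Defs
begin



definition conj3 :: "mat3 \<Rightarrow> mat3 \<Rightarrow> mat3" where
  "conj3 Rt A = transpose Rt ** A ** Rt"

lemma conj3_add: "conj3 Rt (A + B) = conj3 Rt A + conj3 Rt B"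
  unfolding conj3_def by (simp add: vec_eq_iff matrix_matrix_mult_def sum_3 transpose_def algebra_simps)

lemma conj3_diff: "conj3 Rt (A - B) = conj3 Rt A - conj3 Rt B"
  unfolding conj3_def by (simp add: vec_eq_iff matrix_matrix_mult_def sum_3 transpose_def algebra_simps)

lemma conj3_scale: "conj3 Rt (c *\<^sub>R A) = c *\<^sub>R conj3 Rt A"
  unfolding conj3_def by (simp add: vec_eq_iff matrix_matrix_mult_def sum_3 transpose_def algebra_simps)

lemma conj3_outer: "conj3 Rt (outer a b) = outer (transpose Rt *v a) (transpose Rt *v b)"
  unfolding conj3_def by (simp add: vec_eq_iff matrix_matrix_mult_def matrix_vector_mult_def outer_def sum_3 transpose_def algebra_simps)

lemma mdot_trace: "mdot A B = trace (transpose A ** B)"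
  unfolding mdot_def trace_def matrix_matrix_mult_def transpose_def
  by (simp add: sum_3 algebra_simps)

lemma mtrace_trace: "mtrace A = trace A"
  unfolding mtrace_def trace_def ..




definition frame :: "real \<Rightarrow> real \<Rightarrow> mat3" where
  "frame \<theta> \<phi> = vector [nvec \<theta> \<phi>, mvec \<theta> \<phi>, pvec \<phi>]"

lemma inner3: "(u::real^3) \<bullet> v = u$1 * v$1 + u$2 * v$2 + u$3 * v$3"
  unfolding inner_vec_def sum_3 by simp

lemma nn: "nvec a b \<bullet> nvec a b = 1"
  unfolding inner3 nvec_def apply simp using sin_cos_squared_add[of a] sin_cos_squared_add[of b] by algebra
lemma mm: "mvec a b \<bullet> mvec a b = 1"
  unfolding inner3 mvec_def apply simp using sin_cos_squared_add[of a] sin_cos_squared_add[of b] by algebra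
lemma pp: "pvec b \<bullet> pvec b = 1"
  unfolding inner3 pvec_def apply simp using sin_cos_squared_add[of b] by algebra
lemma nm: "nvec a b \<bullet> mvec a b = 0"
  unfolding inner3 nvec_def mvec_def apply simp using sin_cos_squared_add[of a] sin_cos_squared_add[of b] by algebra
lemma np: "nvec a b \<bullet> pvec b = 0"
    unfolding inner3 nvec_def pvec_def by (simp add: algebra_simps)
lemma mp3: "mvec a b \<bullet> pvec b = 0"
    unfolding inner3 mvec_def pvec_def by (simp add: algebra_simps)
lemma mn: "mvec a b \<bullet> nvec a b = 0" using nm by (simp add: inner_commute)
lemma pn: "pvec b \<bullet> nvec a b = 0" using np by (simp add: inner_commute)
lemma pm: "pvec b \<bullet> mvec a b = 0" using mp3 by (simp add: inner_commute)

lemma frame_orth1: "frame a b ** transpose (frame a b) = mat 1"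
proof -
  have "(frame a b ** transpose (frame a b))$i$j = (frame a b $ i) \<bullet> (frame a b $ j)" for i j
    unfolding matrix_matrix_mult_def transpose_def inner_vec_def by simp
  thus ?thesis unfolding vec_eq_iff forall_3 frame_def
    by (simp add: mat_def nn mm pp nm np mp3 mn pn pm)
qed

lemma frame_orth2: "transpose (frame a b) ** frame a b = mat 1"
  using frame_orth1[of a b] orthogonal_matrix[of "transpose (frame a b)"]
  unfolding orthogonal_matrix_def by simp

lemma frame_cols: "transpose (frame a b) *v axis 1 1 = nvec a b"
   "transpose (frame a b) *v axis 2 1 = mvec a b"
   "transpose (frame a b) *v axis 3 1 = pvec b"
  unfolding frame_def by (simp_all add: vec_eq_iff forall_3 matrix_vector_mult_def transpose_def sum_3 axis_def)




abbreviation "e1 \<equiv> (axis 1 1 :: real^3)"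
abbreviation "e2 \<equiv> (axis 2 1 :: real^3)"
abbreviation "e3 \<equiv> (axis 3 1 :: real^3)"

definition "E' = outer e1 e1 - (1/3) *\<^sub>R mat 1"
definition "F' = outer e1 e2 + outer e2 e1"
definition "G' = outer e1 e3 + outer e3 e1"
definition "X' = outer e2 e3 + outer e3 e2"
definition "Y' = outer e2 e2 - outer e3 e3"

lemma conj3_mul: "Rt ** transpose Rt = mat 1 \<Longrightarrow> conj3 Rt A ** conj3 Rt B = conj3 Rt (A ** B)"
  unfolding conj3_def by (metis matrix_mul_assoc matrix_mul_rid)

lemma conj3_trace: "Rt ** transpose Rt = mat 1 \<Longrightarrow> trace (conj3 Rt A) = trace A"
  unfolding conj3_def by (metis matrix_mul_assoc matrix_mul_rid trace_mul_sym)

lemma conj3_transpose: "transpose (conj3 Rt A) = conj3 Rt (transpose A)"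
  unfolding conj3_def by (simp add: matrix_transpose_mul matrix_mul_assoc)

lemma conj3_mdot: "Rt ** transpose Rt = mat 1 \<Longrightarrow> mdot (conj3 Rt A) (conj3 Rt B) = mdot A B"
  unfolding mdot_trace conj3_transpose by (simp add: conj3_mul conj3_trace)

lemma conj3_I: "transpose Rt ** Rt = mat 1 \<Longrightarrow> conj3 Rt (mat 1) = mat 1"
  unfolding conj3_def by simp

lemma Emat_conj: "Emat a b = conj3 (frame a b) E'"
  unfolding E'_def Emat_def conj3_diff conj3_scale conj3_outer frame_cols conj3_I[OF frame_orth2] ..
lemma Fmat_conj: "Fmat a b = conj3 (frame a b) F'"
  unfolding F'_def Fmat_def conj3_add conj3_outer frame_cols ..
lemma Gmat_conj: "Gmat a b = conj3 (frame a b) G'"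
  unfolding G'_def Gmat_def conj3_add conj3_outer frame_cols ..
lemma Xmat_conj: "Xmat a b = conj3 (frame a b) X'"
  unfolding X'_def Xmat_def conj3_add conj3_outer frame_cols ..
lemma Ymat_conj: "Ymat a b = conj3 (frame a b) Y'"
  unfolding Y'_def Ymat_def conj3_diff conj3_outer frame_cols ..

definition "Dm w0 w1 w2 w3 w4 = w0 *\<^sub>R E' + w1 *\<^sub>R F' + w2 *\<^sub>R G' + w3 *\<^sub>R X' + w4 *\<^sub>R Y'"

lemma Dm_entries: "Dm w0 w1 w2 w3 w4 = vector [vector [2/3*w0, w1, w2], vector [w1, -w0/3 + w4, w3], vector [w2, w3, -w0/3 - w4]]"
  unfolding Dm_def E'_def F'_def G'_def X'_def Y'_def
  by (simp add: vec_eq_iff forall_3 outer_def axis_def mat_def)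

lemma tr3: "trace (Dm w0 w1 w2 w3 w4 ** Dm w0 w1 w2 w3 w4 ** Dm w0 w1 w2 w3 w4)
   = 2*w0^3/9 + w0*(w1^2+w2^2) - 2*w0*(w3^2+w4^2) + 3*(w4*(w1^2-w2^2) + 2*w3*w1*w2)"
  unfolding Dm_entries trace_def sum_3 matrix_matrix_mult_def
  by (simp add: power2_eq_square power3_eq_cube field_simps)

lemma dd: "mdot (Dm w0 w1 w2 w3 w4) (Dm w0 w1 w2 w3 w4) = 2/3*w0^2 + 2*(w1^2+w2^2+w3^2+w4^2)"
  unfolding Dm_entries mdot_def sum_3
  by (simp add: power2_eq_square algebra_simps)

lemma ed: "mdot E' (Dm w0 w1 w2 w3 w4) = 2/3*w0"
  unfolding Dm_entries mdot_def sum_3 E'_def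
  by (simp add: outer_def axis_def mat_def algebra_simps)




lemma key_poly:
  fixes b u V :: real assumes V: "V \<ge> 0"
  shows "V^2 + V*(4*b^2+b+12*u^2-9*u) + b^2*(2*b+1)^2 + u^2*(24*b^2+60*b+27) + 36*u^4 \<ge> 0"
proof -
  define t where "t = b + 3*u"
  define m where "m = t^2/2 - t - 3/8"
  define Z where "Z = V + 24*(u - (1+2*t)/8)^2 + m"
  have eq: "V^2 + V*(4*b^2+b+12*u^2-9*u) + b^2*(2*b+1)^2 + u^2*(24*b^2+60*b+27) + 36*u^4
        = Z^2 + t^2*(3/4+2*t)"
    unfolding Z_def m_def t_def by (simp add: power2_eq_square power4_eq_xxxx field_simps)
  show ?thesis
  proof (cases "t \<ge> -3/8")
    case True
    then have "t^2*(3/4+2*t) \<ge> 0" by simp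
    moreover have "Z^2 \<ge> 0" by simp
    ultimately show ?thesis unfolding eq by linarith
  next
    case False
    have "t^2/2 \<ge> 0" by simp
    then have m0: "m > 0" unfolding m_def using False by linarith
    have "Z \<ge> m" unfolding Z_def using V by simp
    then have "Z^2 \<ge> m^2" using m0 by (simp add: power_mono)
    moreover have "m^2 + t^2*(3/4+2*t) = ((2*t+1)*(2*t+3))^2/64"
      unfolding m_def by (simp add: power2_eq_square field_simps)
    moreover have "((2*t+1)*(2*t+3))^2/64 \<ge> 0" by simp
    ultimately show ?thesis unfolding eq by linarith
  qed
qed

lemma subst_poly:
  fixes s b u V :: real assumes s: "s * s = 6"
  shows "- s/2*(2*(s*b)^3/9 + (s*b)*V - 2*(s*b)*(s*u)^2 + 3*(s*u)*V) - (s*b)^2/2 + 9/2*(s*u)^2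
     + (s*(s*b)/3 + (s*b)^2/3 + V + (s*u)^2)^2
   = V^2 + V*(4*b^2+b+12*u^2-9*u) + b^2*(2*b+1)^2 + u^2*(24*b^2+60*b+27) + 36*u^4"
proof -
  have ss: "s * (s * X) = 6 * X" for X using s by (metis mult.assoc)
  show ?thesis
    by (simp add: power2_eq_square power3_eq_cube power4_eq_xxxx field_simps) (simp add: ss algebra_simps)
qed





lemma mdot_scale: "mdot (c *\<^sub>R A) B = c * mdot A B"
  unfolding mdot_def by (simp add: sum_distrib_left mult.assoc)

theorem lemma4p2:
  fixes t R :: real and h :: "real \<Rightarrow> real" and x :: "real^3" and \<theta> \<phi> :: real
    and W :: mat3 and w0 w1 w2 w3 w4 :: real
  assumes "t \<ge> 0" and "R > 1"
    and "is_minimizer t R h"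
    and "\<forall>r\<in>{1..R}. h r \<ge> 2/3"
    and "1 \<le> norm x" and "norm x \<le> R"
    and "0 < \<theta>" and "\<theta> < pi"
    and "x = norm x *\<^sub>R nvec \<theta> \<phi>"
    and "W \<in> S0"
    and "W = w0 *\<^sub>R Emat \<theta> \<phi> + w1 *\<^sub>R Fmat \<theta> \<phi> + w2 *\<^sub>R Gmat \<theta> \<phi>
             + w3 *\<^sub>R Xmat \<theta> \<phi> + w4 *\<^sub>R Ymat \<theta> \<phi>"
  shows "psi W w0 w3 w4
           + 3 * h (norm x) / 8
             * (2 * mdot (sqrt (3/2) *\<^sub>R (outer (x /\<^sub>R norm x) (x /\<^sub>R norm x) - (1/3) *\<^sub>R mat 1)) W
                + mdot W W)^2 \<ge> 0"
proof -
  let ?Rt = "frame \<theta> \<phi>"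
  let ?D = "Dm w0 w1 w2 w3 w4"
  have orth: "?Rt ** transpose ?Rt = mat 1" by (rule frame_orth1)
  have WD: "W = conj3 ?Rt ?D"
    unfolding assms(11) Dm_def conj3_add conj3_scale Emat_conj Fmat_conj Gmat_conj Xmat_conj Ymat_conj ..
  have hx: "h (norm x) \<ge> 2/3" using assms(4) assms(5) assms(6) by auto
  have nx: "x /\<^sub>R norm x = nvec \<theta> \<phi>"
  proof -
    have "norm x > 0" using assms(5) by linarith
    then show ?thesis using assms(9) by (metis divideR_right less_irrefl)
  qed
  define s where "s = sqrt 6"
  have s2: "s * s = 6" unfolding s_def by simp
  have s0: "s > 0" unfolding s_def by simp
  have sq32: "sqrt (3/2) = s / 2"
  proof -
    have a: "sqrt (4 * (3/2)) = sqrt 4 * sqrt (3/2)" by (rule real_sqrt_mult)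
    have b: "sqrt (4::real) = 2" by (rule real_sqrt_unique) simp_all
    have "(4::real) * (3/2) = 6" by simp
    then show ?thesis using a b unfolding s_def by simp
  qed
  define V where "V = w1^2 + w2^2"
  define \<rho> where "\<rho> = sqrt (w3^2 + w4^2)"
  define q where "q = w4*(w1^2-w2^2) + 2*w3*w1*w2"
  have V0: "V \<ge> 0" unfolding V_def by simp
  have r0: "\<rho> \<ge> 0" unfolding \<rho>_def by simp
  have r2: "\<rho>^2 = w3^2 + w4^2" unfolding \<rho>_def by simp
  have "q^2 \<le> (\<rho> * V)^2"
  proof -
    have "(\<rho> * V)^2 - q^2 = (w3*(w1^2-w2^2) - 2*w4*w1*w2)^2"
      unfolding power_mult_distrib r2 q_def V_def by (simp add: power2_eq_square algebra_simps)
    moreover have "(w3*(w1^2-w2^2) - 2*w4*w1*w2)^2 \<ge> 0" by simp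
    ultimately show ?thesis by linarith
  qed
  then have qle: "q \<le> \<rho> * V" by (rule power2_le_imp_le) (simp add: r0 V0)
  have T: "mtrace (W ** W ** W) = 2*w0^3/9 + w0*V - 2*w0*\<rho>^2 + 3*q"
    unfolding mtrace_trace WD conj3_mul[OF orth] conj3_trace[OF orth] tr3 V_def r2 q_def by simp
  have WW: "mdot W W = 2/3*w0^2 + 2*(V + \<rho>^2)"
    unfolding WD conj3_mdot[OF orth] dd V_def r2 by simp
  have EW: "mdot (sqrt (3/2) *\<^sub>R (outer (x /\<^sub>R norm x) (x /\<^sub>R norm x) - (1/3) *\<^sub>R mat 1)) W = s/2 * (2/3*w0)"
    unfolding nx Emat_def[symmetric] mdot_scale sq32 Emat_conj WD conj3_mdot[OF orth] ed ..
  define S where "S = s*w0/3 + w0^2/3 + V + \<rho>^2"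
  have inner: "2 * mdot (sqrt (3/2) *\<^sub>R (outer (x /\<^sub>R norm x) (x /\<^sub>R norm x) - (1/3) *\<^sub>R mat 1)) W
                + mdot W W = 2 * S"
    unfolding EW WW S_def by (simp add: algebra_simps)
  have psi: "psi W w0 w3 w4 = - s/2 * (2*w0^3/9 + w0*V - 2*w0*\<rho>^2 + 3*q) - 1/2*w0^2 + 9/2*\<rho>^2"
    unfolding psi_def T r2 s_def by simp
  define b where "b = w0 / s"
  define u where "u = \<rho> / s"
  have w0b: "w0 = s*b" and ru: "\<rho> = s*u" unfolding b_def u_def using s0 by simp_all
  have key: "- s/2*(2*(s*b)^3/9 + (s*b)*V - 2*(s*b)*(s*u)^2 + 3*(s*u)*V) - (s*b)^2/2 + 9/2*(s*u)^2
     + (s*(s*b)/3 + (s*b)^2/3 + V + (s*u)^2)^2 \<ge> 0"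
    unfolding subst_poly[OF s2] using key_poly[OF V0] .
  have g0: "- s/2 * (2*w0^3/9 + w0*V - 2*w0*\<rho>^2 + 3*(\<rho>*V)) - 1/2*w0^2 + 9/2*\<rho>^2 + S^2 \<ge> 0"
    using key unfolding S_def w0b ru by (simp add: mult.assoc)
  have "- s/2 * (3*q) \<ge> - s/2 * (3*(\<rho>*V))" using qle s0 by simp
  moreover have "3 * h (norm x) / 8 * (2*S)^2 \<ge> S^2"
  proof -
    have "3 * h (norm x) / 8 * (2*S)^2 = (3 * h (norm x) / 2) * S^2" by (simp add: power2_eq_square)
    moreover have "3 * h (norm x) / 2 \<ge> 1" using hx by simp
    ultimately show ?thesis by (metis mult_right_mono mult_1 zero_le_power2)
  qed
  ultimately show ?thesis unfolding inner psi using g0 by (simp add: algebra_simps)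
qed


end
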